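(* Let $A$ be a locally-complex Cayley--Dickson algebra and $f(x)\in A[x]$ a polynomial of degree $n$. Then the set of spherical roots of $f(x)$ is a union of at most $\lfloor n/2\rfloor$ quadratic-equivalence classes.
   Context: Real Cayley--Dickson algebras: $A_0=\mathbb{R}$ with identity involution, $A_{k+1}=A_k\{\gamma_k\}=A_k\times A_k$ with product $(a,b)(c,d)=(ac+\gamma_k\bar d b,\ da+b\bar c)$ and involution $\overline{(a,b)}=(\bar a,-b)$. A real unital algebra is locally-complex if every non-real element generates a subalgebra isomorphic to $\mathbb{C}$ (for Cayley--Dickson algebras: all $\gamma_k=-1$ up to isomorphism). Trace $\mathrm{tr}(\lambda)=\lambda+\bar\lambda\in\mathbb{R}$, norm $\mathrm{n}(\lambda)=\bar\lambda\lambda\in\mathbb{R}$, characteristic polynomial $p_\lambda(x)=x^2-\mathrm{tr}(\lambda)x+\mathrm{n}(\lambda)$. $A[x]=A\otimes_{\mathbb{R}}\mathbb{R}[x]$ with central $x$; $f(x)=a_mx^m+\dots+a_0$, $a_k\in A$; substitution $f(r)=\sum_k a_k(r^k)$. A root $\lambda\in A\setminus\mathbb{R}$ of $f$ is spherical if every $r\in A$ with $p_\lambda(r)=0$ is a root of $f$. Elements $r,\lambda$ are quadratically-equivalent if $\mathrm{tr}(r)=\mathrm{tr}(\lambda)$ and $\mathrm{n}(r)=\mathrm{n}(\lambda)$. *)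

theory Defs
  imports Complex_Main
begin

text \<open>Real Cayley--Dickson algebra A_k, elements represented as real lists of length 2^k.
  An element (a,b) of A_(k+1) = A_k x A_k is the list a @ b.\<close>

definition cd_carrier :: "nat \<Rightarrow> real list set" where
  "cd_carrier k = {x. length x = 2 ^ k}"

definition cd_add :: "real list \<Rightarrow> real list \<Rightarrow> real list" where
  "cd_add x y = map2 (+) x y"

definition cd_neg :: "real list \<Rightarrow> real list" where
  "cd_neg x = map uminus x"

definition cd_sub :: "real list \<Rightarrow> real list \<Rightarrow> real list" where
  "cd_sub x y = cd_add x (cd_neg y)"

definition cd_scale :: "real \<Rightarrow> real list \<Rightarrow> real list" where
  "cd_scale c x = map ((*) c) x"

definition cd_of_real :: "nat \<Rightarrow> real \<Rightarrow> real list" where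
  "cd_of_real k r = r # replicate (2 ^ k - 1) 0"

definition cd_zero :: "nat \<Rightarrow> real list" where
  "cd_zero k = cd_of_real k 0"

definition cd_one :: "nat \<Rightarrow> real list" where
  "cd_one k = cd_of_real k 1"

definition cd_is_real :: "nat \<Rightarrow> real list \<Rightarrow> bool" where
  "cd_is_real k x \<longleftrightarrow> (\<exists>r. x = cd_of_real k r)"

fun cd_conj :: "nat \<Rightarrow> real list \<Rightarrow> real list" where
  "cd_conj 0 x = x"
| "cd_conj (Suc k) x = cd_conj k (take (2 ^ k) x) @ cd_neg (drop (2 ^ k) x)"

fun cd_mult_gen :: "(nat \<Rightarrow> real) \<Rightarrow> nat \<Rightarrow> real list \<Rightarrow> real list \<Rightarrow> real list" where
  "cd_mult_gen \<gamma> 0 x y = [hd x * hd y]"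
| "cd_mult_gen \<gamma> (Suc k) x y =
     (let a = take (2 ^ k) x; b = drop (2 ^ k) x;
          c = take (2 ^ k) y; d = drop (2 ^ k) y
      in cd_add (cd_mult_gen \<gamma> k a c) (cd_scale (\<gamma> k) (cd_mult_gen \<gamma> k (cd_conj k d) b))
         @ cd_add (cd_mult_gen \<gamma> k d a) (cd_mult_gen \<gamma> k b (cd_conj k c)))"

text \<open>The locally-complex Cayley--Dickson algebra A_k: all gamma_k = -1
  (every locally-complex real Cayley--Dickson algebra is isomorphic to one of these).\<close>
definition cd_mult :: "nat \<Rightarrow> real list \<Rightarrow> real list \<Rightarrow> real list" where
  "cd_mult k x y = cd_mult_gen (\<lambda>_. -1) k x y"

fun cd_pow :: "nat \<Rightarrow> real list \<Rightarrow> nat \<Rightarrow> real list" where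
  "cd_pow k r 0 = cd_one k"
| "cd_pow k r (Suc j) = cd_mult k r (cd_pow k r j)"

text \<open>tr(lambda) = lambda + conj lambda and n(lambda) = conj lambda * lambda, which lie in R;
  we read off the real number as the first coordinate.\<close>
definition cd_tr :: "nat \<Rightarrow> real list \<Rightarrow> real" where
  "cd_tr k x = hd (cd_add x (cd_conj k x))"

definition cd_norm :: "nat \<Rightarrow> real list \<Rightarrow> real" where
  "cd_norm k x = hd (cd_mult k (cd_conj k x) x)"

definition cd_charpoly_eval :: "nat \<Rightarrow> real list \<Rightarrow> real list \<Rightarrow> real list" where
  "cd_charpoly_eval k l r =
     cd_add (cd_sub (cd_pow k r 2) (cd_scale (cd_tr k l) r)) (cd_of_real k (cd_norm k l))"

definition cd_poly_eval :: "nat \<Rightarrow> (nat \<Rightarrow> real list) \<Rightarrow> nat \<Rightarrow> real list \<Rightarrow> real list" where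
  "cd_poly_eval k a n r = foldr cd_add (map (\<lambda>j. cd_mult k (a j) (cd_pow k r j)) [0..<Suc n]) (cd_zero k)"

definition cd_spherical_root :: "nat \<Rightarrow> (nat \<Rightarrow> real list) \<Rightarrow> nat \<Rightarrow> real list \<Rightarrow> bool" where
  "cd_spherical_root k a n l \<longleftrightarrow>
     l \<in> cd_carrier k \<and> \<not> cd_is_real k l \<and> cd_poly_eval k a n l = cd_zero k \<and>
     (\<forall>r \<in> cd_carrier k. cd_charpoly_eval k l r = cd_zero k \<longrightarrow> cd_poly_eval k a n r = cd_zero k)"

definition cd_quad_equiv :: "nat \<Rightarrow> real list \<Rightarrow> real list \<Rightarrow> bool" where
  "cd_quad_equiv k r l \<longleftrightarrow> cd_tr k r = cd_tr k l \<and> cd_norm k r = cd_norm k l"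

definition cd_quad_class :: "nat \<Rightarrow> real list \<Rightarrow> real list set" where
  "cd_quad_class k l = {r \<in> cd_carrier k. cd_quad_equiv k r l}"

end

theory Submission
  imports Defs "HOL-Computational_Algebra.Polynomial"
begin

definition cj :: "real list \<Rightarrow> real list" where
  "cj x = hd x # map uminus (tl x)"

definition sumsq :: "real list \<Rightarrow> real" where
  "sumsq x = sum_list (map (\<lambda>v. v^2) x)"

lemma len_add[simp]: "length (cd_add x y) = min (length x) (length y)"
  by (simp add: cd_add_def)
lemma len_neg[simp]: "length (cd_neg x) = length x"
  by (simp add: cd_neg_def)
lemma len_sub[simp]: "length (cd_sub x y) = min (length x) (length y)"
  by (simp add: cd_sub_def)
lemma len_scale[simp]: "length (cd_scale c x) = length x"
  by (simp add: cd_scale_def)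
lemma len_of_real[simp]: "length (cd_of_real k r) = 2^k"
  by (simp add: cd_of_real_def)
lemma len_cj[simp]: "x \<noteq> [] \<Longrightarrow> length (cj x) = length x"
  by (simp add: cj_def)
lemma nth_add[simp]: "i < length x \<Longrightarrow> i < length y \<Longrightarrow> cd_add x y ! i = x!i + y!i"
  by (simp add: cd_add_def)
lemma nth_neg[simp]: "i < length x \<Longrightarrow> cd_neg x ! i = - (x!i)"
  by (simp add: cd_neg_def)
lemma nth_sub[simp]: "i < length x \<Longrightarrow> i < length y \<Longrightarrow> cd_sub x y ! i = x!i - y!i"
  by (simp add: cd_sub_def)
lemma nth_scale[simp]: "i < length x \<Longrightarrow> cd_scale c x ! i = c * x!i"
  by (simp add: cd_scale_def)
lemma nth_of_real[simp]: "i < 2^k \<Longrightarrow> cd_of_real k r ! i = (if i = 0 then r else 0)"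
  by (simp add: cd_of_real_def nth_Cons')
lemma nth_cj[simp]: "i < length x \<Longrightarrow> cj x ! i = (if i = 0 then x!0 else - (x!i))"
  by (cases x) (auto simp: cj_def nth_Cons')

lemma take_add: "take n (cd_add x y) = cd_add (take n x) (take n y)"
  by (simp add: cd_add_def take_map take_zip)
lemma drop_add: "drop n (cd_add x y) = cd_add (drop n x) (drop n y)"
  by (simp add: cd_add_def drop_map drop_zip)
lemma take_scale: "take n (cd_scale c x) = cd_scale c (take n x)"
  by (simp add: cd_scale_def take_map)
lemma drop_scale: "drop n (cd_scale c x) = cd_scale c (drop n x)"
  by (simp add: cd_scale_def drop_map)
lemma add_append: "length u = length u' \<Longrightarrow> cd_add (u @ v) (u' @ v') = cd_add u u' @ cd_add v v'"
  by (simp add: cd_add_def)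
lemma scale_append: "cd_scale c (u @ v) = cd_scale c u @ cd_scale c v"
  by (simp add: cd_scale_def)
lemma neg_append: "cd_neg (u @ v) = cd_neg u @ cd_neg v"
  by (simp add: cd_neg_def)

lemma of_real_Suc: "cd_of_real (Suc k) r = cd_of_real k r @ cd_of_real k 0"
proof -
  have e: "(2::nat)^Suc k - 1 = (2^k - 1) + Suc (2^k - 1)" by simp
  have r: "replicate (2^k) (0::real) = 0 # replicate (2^k - 1) 0"
    by (cases "2^k::nat") auto
  show ?thesis unfolding cd_of_real_def e replicate_add by (simp add: r)
qed
lemma take_of_real: "take (2^k) (cd_of_real (Suc k) r) = cd_of_real k r"
  by (simp add: of_real_Suc)
lemma drop_of_real: "drop (2^k) (cd_of_real (Suc k) r) = cd_of_real k 0"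
  by (simp add: of_real_Suc)

lemma conj_eq: "length x = 2^k \<Longrightarrow> cd_conj k x = cj x"
proof (induction k arbitrary: x)
  case 0
  then show ?case by (cases x) (auto simp: cj_def)
next
  case (Suc k)
  have l1: "length (take (2^k) x) = 2^k" using Suc.prems by simp
  have l2: "length (drop (2^k) x) = 2^k" using Suc.prems by simp
  have ne: "take (2^k) x \<noteq> []" using l1 by (metis list.size(3) power_not_zero zero_neq_numeral)
  show ?case
    apply (simp add: Suc.IH[OF l1])
    apply (rule nth_equalityI)
    using Suc.prems l1 ne by (auto simp: nth_append)
qed

lemma len_mult[simp]: "length (cd_mult_gen g k x y) = 2^k"
  by (induction k arbitrary: x y) (simp_all add: Let_def)

lemma cj_add: "length x = length y \<Longrightarrow> x \<noteq> [] \<Longrightarrow> cj (cd_add x y) = cd_add (cj x) (cj y)"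
  by (cases x; cases y) (auto simp: cj_def cd_add_def intro!: nth_equalityI)


lemma hd_add: "x \<noteq> [] \<Longrightarrow> y \<noteq> [] \<Longrightarrow> hd (cd_add x y) = hd x + hd y"
  by (cases x; cases y) (auto simp: cd_add_def)
lemma hd_scale: "x \<noteq> [] \<Longrightarrow> hd (cd_scale c x) = c * hd x"
  by (cases x) (auto simp: cd_scale_def)

lemma mult_lin:
  "length x = 2^k \<Longrightarrow> length y = 2^k \<Longrightarrow> length z = 2^k \<Longrightarrow>
   cd_mult_gen g k (cd_add x y) z = cd_add (cd_mult_gen g k x z) (cd_mult_gen g k y z) \<and>
   cd_mult_gen g k z (cd_add x y) = cd_add (cd_mult_gen g k z x) (cd_mult_gen g k z y)"
proof (induction k arbitrary: x y z)
  case 0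
  then show ?case by (auto simp: length_Suc_conv cd_add_def distrib_left distrib_right)
next
  case (Suc k)
  let ?h = "2^k::nat"
  have L: "length (take ?h w) = ?h" "length (drop ?h w) = ?h" "take ?h w \<noteq> []" "drop ?h w \<noteq> []"
    if "length w = 2^Suc k" for w using that by auto
  note IH1 = Suc.IH[THEN conjunct1] and IH2 = Suc.IH[THEN conjunct2]
  note Lx = L[OF Suc.prems(1)] and Ly = L[OF Suc.prems(2)] and Lz = L[OF Suc.prems(3)]
  show ?case
    using Suc.prems Lx Ly Lz
    apply (simp add: Let_def take_add drop_add conj_eq cj_add IH1 IH2)
    apply (intro conjI; rule nth_equalityI; simp add: nth_append distrib_left)
    done
qed

lemma mult_scale:
  "length x = 2^k \<Longrightarrow> length z = 2^k \<Longrightarrow>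
   cd_mult_gen g k (cd_scale c x) z = cd_scale c (cd_mult_gen g k x z) \<and>
   cd_mult_gen g k z (cd_scale c x) = cd_scale c (cd_mult_gen g k z x)"
proof (induction k arbitrary: x z)
  case 0
  then show ?case by (auto simp: length_Suc_conv cd_scale_def)
next
  case (Suc k)
  let ?h = "2^k::nat"
  have L: "length (take ?h w) = ?h" "length (drop ?h w) = ?h" "take ?h w \<noteq> []" "drop ?h w \<noteq> []"
    if "length w = 2^Suc k" for w using that by auto
  have cjs: "cj (cd_scale c w) = cd_scale c (cj w)" if "w \<noteq> []" for w
    using that by (cases w) (auto simp: cj_def cd_scale_def)
  note IH1 = Suc.IH[THEN conjunct1] and IH2 = Suc.IH[THEN conjunct2]
  note Lx = L[OF Suc.prems(1)] and Lz = L[OF Suc.prems(2)]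
  show ?case
    using Suc.prems Lx Lz
    apply (simp add: Let_def take_scale drop_scale conj_eq cjs IH1 IH2)
    apply (intro conjI; rule nth_equalityI; simp add: nth_append distrib_left)
    done
qed


lemma zero_as_scale: "length y = 2^k \<Longrightarrow> cd_of_real k 0 = cd_scale 0 y"
  by (rule nth_equalityI) auto

lemma mult_zeroL: "length y = 2^k \<Longrightarrow> cd_mult_gen g k (cd_of_real k 0) y = cd_of_real k 0"
proof -
  assume l: "length y = 2^k"
  have "cd_mult_gen g k (cd_of_real k 0) y = cd_mult_gen g k (cd_scale 0 y) y"
    using zero_as_scale[OF l] by simp
  also have "\<dots> = cd_scale 0 (cd_mult_gen g k y y)" using mult_scale[OF l l] by blast
  also have "\<dots> = cd_of_real k 0" by (rule nth_equalityI) auto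
  finally show ?thesis .
qed

lemma mult_zeroR: "length y = 2^k \<Longrightarrow> cd_mult_gen g k y (cd_of_real k 0) = cd_of_real k 0"
proof -
  assume l: "length y = 2^k"
  have "cd_mult_gen g k y (cd_of_real k 0) = cd_mult_gen g k y (cd_scale 0 y)"
    using zero_as_scale[OF l] by simp
  also have "\<dots> = cd_scale 0 (cd_mult_gen g k y y)" using mult_scale[OF l l] by blast
  also have "\<dots> = cd_of_real k 0" by (rule nth_equalityI) auto
  finally show ?thesis .
qed

lemma of_real_ne[simp]: "cd_of_real k r \<noteq> []"
  by (simp add: cd_of_real_def)

lemma cj_of_real: "cj (cd_of_real k r) = cd_of_real k r"
  by (rule nth_equalityI) auto

lemma mult_one:
  "length x = 2^k \<Longrightarrow> cd_mult_gen g k x (cd_of_real k 1) = x \<and> cd_mult_gen g k (cd_of_real k 1) x = x"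
proof (induction k arbitrary: x)
  case 0
  then show ?case by (auto simp: length_Suc_conv cd_of_real_def)
next
  case (Suc k)
  let ?h = "2^k::nat"
  have L: "length (take ?h w) = ?h" "length (drop ?h w) = ?h" "take ?h w \<noteq> []" "drop ?h w \<noteq> []"
    if "length w = 2^Suc k" for w using that by auto
  note Lx = L[OF Suc.prems(1)]
  have "cd_mult_gen g (Suc k) x (cd_of_real (Suc k) 1) = x"
    using Suc.prems Lx
    apply (simp add: Let_def take_of_real drop_of_real conj_eq cj_of_real Suc.IH mult_zeroL mult_zeroR)
    apply (rule nth_equalityI; simp add: nth_append)
    done
  moreover have "cd_mult_gen g (Suc k) (cd_of_real (Suc k) 1) x = x"
    using Suc.prems Lx
    apply (simp add: Let_def take_of_real drop_of_real conj_eq cj_of_real Suc.IH mult_zeroL mult_zeroR)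
    apply (rule nth_equalityI; simp add: nth_append)
    done
  ultimately show ?case by simp
qed


abbreviation "G \<equiv> (\<lambda>_::nat. -1::real)"

lemma neg_scale: "cd_neg w = cd_scale (-1) w"
  by (simp add: cd_neg_def cd_scale_def)

lemma sumsq_append: "sumsq (a @ b) = sumsq a + sumsq b"
  by (simp add: sumsq_def)

lemma take_cj: "length x = 2^Suc k \<Longrightarrow> take (2^k) (cj x) = cj (take (2^k) x)"
  by (cases x) (auto simp: cj_def take_map take_Cons' intro!: nth_equalityI)

lemma drop_cj: "length x = 2^Suc k \<Longrightarrow> drop (2^k) (cj x) = cd_scale (-1) (drop (2^k) x)"
  by (cases x) (auto simp: cj_def drop_map drop_Cons' cd_scale_def)

lemma norm_mult: "length x = 2^k \<Longrightarrow> cd_mult_gen G k (cj x) x = cd_of_real k (sumsq x)"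
proof (induction k arbitrary: x)
  case 0
  then show ?case by (auto simp: length_Suc_conv cd_of_real_def cj_def sumsq_def power2_eq_square)
next
  case (Suc k)
  let ?h = "2^k::nat"
  have L: "length (take ?h w) = ?h" "length (drop ?h w) = ?h" "take ?h w \<noteq> []" "drop ?h w \<noteq> []"
    if "length w = 2^Suc k" for w using that by auto
  note Lx = L[OF Suc.prems(1)]
  have cjne: "cj x \<noteq> []" by (simp add: cj_def)
  have sx: "sumsq x = sumsq (take ?h x) + sumsq (drop ?h x)"
    by (metis append_take_drop_id sumsq_append)
  show ?case
    using Suc.prems Lx cjne
    apply (simp add: Let_def take_cj drop_cj conj_eq Suc.IH mult_scale of_real_Suc)
    apply (intro conjI; rule nth_equalityI; simp add: sx)
    done
qed

lemma mult_e:
  "length a = 2^k \<Longrightarrow> length b = 2^k \<Longrightarrow> length e = 2^k \<Longrightarrow> hd e = 0 \<Longrightarrow>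
   cd_mult_gen G (Suc k) (a @ b) (e @ cd_of_real k 0) =
   cd_mult_gen G k a e @ cd_scale (-1) (cd_mult_gen G k b e)"
proof -
  assume la: "length a = 2^k" and lb: "length b = 2^k" and le: "length e = 2^k" and h: "hd e = 0"
  have cje: "cj e = cd_scale (-1) e"
    using le h by (cases e) (auto simp: cj_def cd_scale_def)
  show ?thesis
    using la lb le
    apply (simp add: Let_def conj_eq cj_of_real mult_zeroL mult_zeroR cje mult_scale)
    apply (intro conjI; rule nth_equalityI; simp)
    done
qed

definition e1 :: "nat \<Rightarrow> real list" where
  "e1 k = 0 # 1 # replicate (2^k - 2) 0"

lemma len_e1[simp]: "k \<noteq> 0 \<Longrightarrow> length (e1 k) = 2^k"
proof -
  assume "k \<noteq> 0"
  then obtain m where "k = Suc m" by (cases k) auto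
  then have "(2::nat)^k \<ge> 2" by simp
  then show ?thesis by (simp add: e1_def)
qed

lemma e1_Suc: "e1 (Suc (Suc k)) = e1 (Suc k) @ cd_of_real (Suc k) 0"
proof -
  have "(2::nat)^Suc k \<ge> 2" by simp
  then have e: "(2::nat)^Suc (Suc k) - 2 = (2^Suc k - 2) + Suc (2^Suc k - 1)" by simp
  have r: "replicate n (0::real) = 0 # replicate (n - 1) 0" if "n > 0" for n
    using that by (cases n) auto
  show ?thesis unfolding e1_def e replicate_add cd_of_real_def
    by simp (subst r[of "2*2^k"]; simp)
qed

lemma e1_sq: "length x = 2^Suc k \<Longrightarrow>
  cd_mult_gen G (Suc k) (cd_mult_gen G (Suc k) x (e1 (Suc k))) (e1 (Suc k)) = cd_scale (-1) x"
proof (induction k arbitrary: x)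
  case 0
  then obtain p q where x: "x = [p, q]"
    by (cases x; cases "tl x") (auto simp: numeral_2_eq_2)
  show ?case by (simp add: x e1_def cd_add_def cd_scale_def)
next
  case (Suc k)
  let ?h = "2^Suc k::nat"
  have L: "length (take ?h x) = ?h" "length (drop ?h x) = ?h" using Suc.prems by auto
  have x: "x = take ?h x @ drop ?h x" by simp
  have he: "hd (e1 (Suc k)) = 0" by (simp add: e1_def)
  have 1: "cd_mult_gen G (Suc (Suc k)) x (e1 (Suc (Suc k))) =
     cd_mult_gen G (Suc k) (take ?h x) (e1 (Suc k)) @ cd_scale (-1) (cd_mult_gen G (Suc k) (drop ?h x) (e1 (Suc k)))"
    apply (subst x) unfolding e1_Suc by (rule mult_e) (use L he in auto)
  let ?a = "take ?h x" and ?b = "drop ?h x" and ?e = "e1 (Suc k)" and ?z = "cd_of_real (Suc k) 0"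
  have "cd_mult_gen G (Suc (Suc k)) (cd_mult_gen G (Suc (Suc k)) x (e1 (Suc (Suc k)))) (e1 (Suc (Suc k)))
     = cd_mult_gen G (Suc (Suc k)) (cd_mult_gen G (Suc k) ?a ?e @ cd_scale (-1) (cd_mult_gen G (Suc k) ?b ?e)) (?e @ ?z)"
    unfolding 1 by (simp only: e1_Suc)
  also have "\<dots> = cd_mult_gen G (Suc k) (cd_mult_gen G (Suc k) ?a ?e) ?e @
      cd_scale (-1) (cd_mult_gen G (Suc k) (cd_scale (-1) (cd_mult_gen G (Suc k) ?b ?e)) ?e)"
    by (rule mult_e) (use L he in \<open>simp_all del: cd_mult_gen.simps\<close>)
  also have "\<dots> = cd_scale (-1) ?a @ cd_scale (-1) (cd_scale (-1) (cd_scale (-1) ?b))"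
    using L by (simp del: cd_mult_gen.simps add: mult_scale Suc.IH)
  also have "\<dots> = cd_scale (-1) x"
    by (subst (3) x, unfold scale_append) (rule arg_cong2[where f=append]; rule nth_equalityI; use L in simp)
  finally show ?case .
qed


lemma M_def': "cd_mult k = cd_mult_gen G k"
  by (rule ext)+ (simp add: cd_mult_def)

lemma Mleft_add: "length x = 2^k \<Longrightarrow> length y = 2^k \<Longrightarrow> length z = 2^k \<Longrightarrow>
   cd_mult k (cd_add x y) z = cd_add (cd_mult k x z) (cd_mult k y z)"
  using mult_lin by (simp add: M_def')
lemma MR_add: "length x = 2^k \<Longrightarrow> length y = 2^k \<Longrightarrow> length z = 2^k \<Longrightarrow>
   cd_mult k z (cd_add x y) = cd_add (cd_mult k z x) (cd_mult k z y)"
  using mult_lin by (simp add: M_def')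
lemma Mleft_scale: "length x = 2^k \<Longrightarrow> length z = 2^k \<Longrightarrow>
   cd_mult k (cd_scale c x) z = cd_scale c (cd_mult k x z)"
  using mult_scale by (simp add: M_def')
lemma MR_scale: "length x = 2^k \<Longrightarrow> length z = 2^k \<Longrightarrow>
   cd_mult k z (cd_scale c x) = cd_scale c (cd_mult k z x)"
  using mult_scale by (simp add: M_def')
lemma M_zeroL: "length y = 2^k \<Longrightarrow> cd_mult k (cd_of_real k 0) y = cd_of_real k 0"
  using mult_zeroL by (simp add: M_def')
lemma M_oneR: "length x = 2^k \<Longrightarrow> cd_mult k x (cd_of_real k 1) = x"
  using mult_one by (simp add: M_def')
lemma M_oneL: "length x = 2^k \<Longrightarrow> cd_mult k (cd_of_real k 1) x = x"
  using mult_one by (simp add: M_def')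
lemma len_M[simp]: "length (cd_mult k x y) = 2^k"
  by (simp add: M_def')

lemma M_of_real: "length x = 2^k \<Longrightarrow> cd_mult k (cd_of_real k c) x = cd_scale c x"
proof -
  assume l: "length x = 2^k"
  have "cd_of_real k c = cd_scale c (cd_of_real k 1)" by (rule nth_equalityI) auto
  then show ?thesis using l by (simp add: Mleft_scale M_oneL)
qed

lemma hd_of_real[simp]: "hd (cd_of_real k r) = r"
  by (simp add: cd_of_real_def)

lemma tr_eq: "length x = 2^k \<Longrightarrow> cd_tr k x = 2 * hd x"
  by (cases x) (auto simp: cd_tr_def conj_eq cj_def cd_add_def)

lemma norm_eq: "length x = 2^k \<Longrightarrow> cd_norm k x = sumsq x"
  by (simp add: cd_norm_def conj_eq M_def' norm_mult)

lemma norm_mult': "length x = 2^k \<Longrightarrow> cd_mult k (cj x) x = cd_of_real k (sumsq x)"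
  by (simp add: M_def' norm_mult)

lemma pow2: "length r = 2^k \<Longrightarrow> cd_pow k r 2 = cd_mult k r r"
  by (simp add: numeral_2_eq_2 cd_one_def M_oneR)

lemma charpoly_self: "length r = 2^k \<Longrightarrow> cd_charpoly_eval k r r = cd_zero k"
proof -
  assume l: "length r = 2^k"
  have ne: "r \<noteq> []" using l by auto
  have a: "cd_of_real k (cd_tr k r) = cd_add r (cj r)"
    using l ne by (intro nth_equalityI) (auto simp: tr_eq hd_conv_nth)
  have "cd_scale (cd_tr k r) r = cd_mult k (cd_of_real k (cd_tr k r)) r"
    using l by (simp add: M_of_real)
  also have "\<dots> = cd_add (cd_mult k r r) (cd_of_real k (sumsq r))"
    unfolding a using l ne by (simp add: Mleft_add norm_mult')
  finally have s: "cd_scale (cd_tr k r) r = cd_add (cd_mult k r r) (cd_of_real k (sumsq r))" .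
  show ?thesis
    unfolding cd_charpoly_eval_def pow2[OF l] s norm_eq[OF l] cd_zero_def
    by (rule nth_equalityI) (use l in auto)
qed

lemma sumsq_Cons: "sumsq (a # x) = a^2 + sumsq x"
  by (simp add: sumsq_def)

lemma sumsq_nonneg: "sumsq x \<ge> 0"
  unfolding sumsq_def by (rule sum_list_nonneg) auto

lemma nonreal_ineq:
  assumes l: "length x = 2^k" and nr: "\<not> cd_is_real k x"
  shows "(cd_tr k x)^2 < 4 * cd_norm k x"
proof -
  obtain a t where x: "x = a # t" using l by (cases x) auto
  have lt: "length t = 2^k - 1" using l x by simp
  have "sumsq t \<noteq> 0"
  proof
    assume "sumsq t = 0"
    then have "\<forall>v\<in>set t. v^2 = 0"
      unfolding sumsq_def by (subst (asm) sum_list_nonneg_eq_0_iff) auto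
    then have "t = replicate (2^k - 1) 0"
      using lt by (intro nth_equalityI) auto
    then have "x = cd_of_real k a" by (simp add: x cd_of_real_def)
    then show False using nr by (auto simp: cd_is_real_def)
  qed
  then have "sumsq t > 0" using sumsq_nonneg[of t] by linarith
  then show ?thesis using l by (simp add: tr_eq norm_eq x sumsq_Cons power_mult_distrib)
qed

lemma real_eq:
  assumes "cd_is_real k x"
  shows "(cd_tr k x)^2 = 4 * cd_norm k x"
proof -
  obtain r where x: "x = cd_of_real k r" using assms by (auto simp: cd_is_real_def)
  have "sumsq (replicate m (0::real)) = 0" for m by (induction m) (auto simp: sumsq_Cons, simp add: sumsq_def)
  then show ?thesis
    by (simp add: x tr_eq norm_eq cd_of_real_def sumsq_Cons power_mult_distrib)
qed


fun ab :: "real \<Rightarrow> real \<Rightarrow> nat \<Rightarrow> real \<times> real" where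
  "ab t q 0 = (0, 1)"
| "ab t q (Suc j) = (t * fst (ab t q j) + snd (ab t q j), - q * fst (ab t q j))"

lemma pow_ab:
  assumes l: "length r = 2^k" and sq: "cd_mult k r r = cd_add (cd_scale t r) (cd_scale (-q) (cd_of_real k 1))"
  shows "cd_pow k r j = cd_add (cd_scale (fst (ab t q j)) r) (cd_scale (snd (ab t q j)) (cd_of_real k 1))"
proof (induction j)
  case 0
  then show ?case using l by (intro nth_equalityI) (auto simp: cd_one_def)
next
  case (Suc j)
  show ?case
    using l by (simp add: Suc MR_add MR_scale M_oneR sq) (rule nth_equalityI; auto simp: algebra_simps)
qed

lemma charpoly_sq:
  assumes l: "length r = 2^k" and c: "cd_charpoly_eval k lam r = cd_zero k"
  shows "cd_mult k r r = cd_add (cd_scale (cd_tr k lam) r) (cd_scale (- cd_norm k lam) (cd_of_real k 1))"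
proof (rule nth_equalityI)
  show "length (cd_mult k r r) = length (cd_add (cd_scale (cd_tr k lam) r) (cd_scale (- cd_norm k lam) (cd_of_real k 1)))"
    using l by simp
  fix i assume i: "i < length (cd_mult k r r)"
  then have "cd_charpoly_eval k lam r ! i = cd_zero k ! i" using c by simp
  then show "cd_mult k r r ! i = cd_add (cd_scale (cd_tr k lam) r) (cd_scale (- cd_norm k lam) (cd_of_real k 1)) ! i"
    using i l by (auto simp: cd_charpoly_eval_def pow2 cd_zero_def split: if_splits)
qed

definition csum :: "nat \<Rightarrow> (nat \<Rightarrow> real list) \<Rightarrow> nat list \<Rightarrow> real list" where
  "csum k g js = foldr cd_add (map g js) (cd_zero k)"

lemma len_csum: "(\<And>j. j \<in> set js \<Longrightarrow> length (g j) = 2^k) \<Longrightarrow> length (csum k g js) = 2^k"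
  by (induction js) (auto simp: csum_def cd_zero_def)

lemma nth_csum: "(\<And>j. j \<in> set js \<Longrightarrow> length (g j) = 2^k) \<Longrightarrow> i < 2^k \<Longrightarrow> csum k g js ! i = (\<Sum>j\<leftarrow>js. g j ! i)"
proof (induction js)
  case Nil
  then show ?case by (simp add: csum_def cd_zero_def)
next
  case (Cons j js)
  then have "length (csum k g js) = 2^k" by (simp add: len_csum)
  with Cons show ?case by (simp add: csum_def)
qed

lemma M_csum: "(\<And>j. j \<in> set js \<Longrightarrow> length (g j) = 2^k) \<Longrightarrow> length r = 2^k \<Longrightarrow>
   cd_mult k (csum k g js) r = csum k (\<lambda>j. cd_mult k (g j) r) js"
proof (induction js)
  case Nil
  then show ?case by (simp add: csum_def cd_zero_def M_zeroL)
next
  case (Cons j js)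
  then have "length (csum k g js) = 2^k" by (simp add: len_csum)
  with Cons show ?case by (simp add: csum_def Mleft_add)
qed


lemma poly_eval_lin:
  assumes la: "\<forall>j\<le>N. length (a j) = 2^k" and l: "length r = 2^k"
    and c: "cd_charpoly_eval k lam r = cd_zero k"
  defines "t \<equiv> cd_tr k lam" and "q \<equiv> cd_norm k lam"
  shows "cd_poly_eval k a N r =
    cd_add (cd_mult k (csum k (\<lambda>j. cd_scale (fst (ab t q j)) (a j)) [0..<Suc N]) r)
           (csum k (\<lambda>j. cd_scale (snd (ab t q j)) (a j)) [0..<Suc N])"
proof -
  let ?js = "[0..<Suc N]"
  have la': "\<And>j. j \<in> set ?js \<Longrightarrow> length (a j) = 2^k" using la by auto
  have sq: "cd_mult k r r = cd_add (cd_scale t r) (cd_scale (-q) (cd_of_real k 1))"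
    unfolding t_def q_def by (rule charpoly_sq[OF l c])
  have pe: "cd_poly_eval k a N r = csum k (\<lambda>j. cd_mult k (a j) (cd_pow k r j)) ?js"
    by (simp add: cd_poly_eval_def csum_def)
  have lA: "length (csum k (\<lambda>j. cd_scale (fst (ab t q j)) (a j)) ?js) = 2^k"
    by (rule len_csum) (use la' in simp)
  have lB: "length (csum k (\<lambda>j. cd_scale (snd (ab t q j)) (a j)) ?js) = 2^k"
    by (rule len_csum) (use la' in simp)
  have lP: "length (csum k (\<lambda>j. cd_mult k (a j) (cd_pow k r j)) ?js) = 2^k"
    by (rule len_csum) simp
  have MA: "cd_mult k (csum k (\<lambda>j. cd_scale (fst (ab t q j)) (a j)) ?js) r
      = csum k (\<lambda>j. cd_mult k (cd_scale (fst (ab t q j)) (a j)) r) ?js"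
    by (rule M_csum) (use la' l in auto)
  show ?thesis
  proof (rule nth_equalityI)
    show "length (cd_poly_eval k a N r) = length (cd_add (cd_mult k (csum k (\<lambda>j. cd_scale (fst (ab t q j)) (a j)) ?js) r)
           (csum k (\<lambda>j. cd_scale (snd (ab t q j)) (a j)) ?js))"
      unfolding pe using lB lP by simp
    fix i assume "i < length (cd_poly_eval k a N r)"
    then have i: "i < 2^k" unfolding pe using lP by simp
    have e: "cd_mult k (a j) (cd_pow k r j) ! i = fst (ab t q j) * (cd_mult k (a j) r ! i) + snd (ab t q j) * (a j ! i)"
      if "j \<in> set ?js" for j
      using la'[OF that] l i by (simp add: pow_ab[OF l sq] MR_add MR_scale M_oneR)
    have "cd_poly_eval k a N r ! i = (\<Sum>j\<leftarrow>?js. fst (ab t q j) * (cd_mult k (a j) r ! i) + snd (ab t q j) * (a j ! i))"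
      unfolding pe using i la'
      by (simp del: upt_Suc add: nth_csum) (rule arg_cong[where f=sum_list], rule map_cong[OF refl], rule e)
    also have "\<dots> = cd_add (cd_mult k (csum k (\<lambda>j. cd_scale (fst (ab t q j)) (a j)) ?js) r)
           (csum k (\<lambda>j. cd_scale (snd (ab t q j)) (a j)) ?js) ! i"
    proof -
      have lM: "length (csum k (\<lambda>j. cd_mult k (cd_scale (fst (ab t q j)) (a j)) r) ?js) = 2^k"
        by (rule len_csum) simp
      have m1: "(\<Sum>j\<leftarrow>?js. fst (ab t q j) * (cd_mult k (a j) r ! i)) =
          (\<Sum>j\<leftarrow>?js. cd_mult k (cd_scale (fst (ab t q j)) (a j)) r ! i)"
        by (rule arg_cong[where f=sum_list], rule map_cong[OF refl]) (use la' l i in \<open>simp add: Mleft_scale\<close>)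
      have m2: "(\<Sum>j\<leftarrow>?js. snd (ab t q j) * (a j ! i)) =
          (\<Sum>j\<leftarrow>?js. cd_scale (snd (ab t q j)) (a j) ! i)"
        by (rule arg_cong[where f=sum_list], rule map_cong[OF refl]) (use la' l i in \<open>simp\<close>)
      have nB: "csum k (\<lambda>j. cd_scale (snd (ab t q j)) (a j)) ?js ! i = (\<Sum>j\<leftarrow>?js. cd_scale (snd (ab t q j)) (a j) ! i)"
        by (rule nth_csum) (use la' i in auto)
      show ?thesis
        unfolding MA using i lM lB
        by (simp del: upt_Suc add: nth_csum sum_list_addf m1 m2 la' nB)
    qed
    finally show "cd_poly_eval k a N r ! i = cd_add (cd_mult k (csum k (\<lambda>j. cd_scale (fst (ab t q j)) (a j)) ?js) r)
           (csum k (\<lambda>j. cd_scale (snd (ab t q j)) (a j)) ?js) ! i" .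
  qed
qed


lemma sumsq_rep0: "sumsq (replicate m (0::real)) = 0"
  by (induction m) (auto simp: sumsq_def)

lemma sph_zero:
  assumes la: "\<forall>j\<le>N. length (a j) = 2^k" and sph: "cd_spherical_root k a N lam"
  defines "t \<equiv> cd_tr k lam" and "q \<equiv> cd_norm k lam"
  shows "csum k (\<lambda>j. cd_scale (fst (ab t q j)) (a j)) [0..<Suc N] = cd_zero k \<and>
         csum k (\<lambda>j. cd_scale (snd (ab t q j)) (a j)) [0..<Suc N] = cd_zero k"
proof -
  let ?js = "[0..<Suc N]"
  let ?A = "csum k (\<lambda>j. cd_scale (fst (ab t q j)) (a j)) ?js"
  let ?B = "csum k (\<lambda>j. cd_scale (snd (ab t q j)) (a j)) ?js"
  have la': "\<And>j. j \<in> set ?js \<Longrightarrow> length (a j) = 2^k" using la by auto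
  have lA: "length ?A = 2^k" by (rule len_csum) (use la' in simp)
  have lB: "length ?B = 2^k" by (rule len_csum) (use la' in simp)
  have ll: "length lam = 2^k" and nr: "\<not> cd_is_real k lam"
    using sph by (auto simp: cd_spherical_root_def cd_carrier_def)
  have k0: "k \<noteq> 0"
  proof
    assume "k = 0"
    then obtain v where "lam = [v]" using ll by (cases lam) auto
    then have "cd_is_real k lam" using \<open>k = 0\<close> by (auto simp: cd_is_real_def cd_of_real_def)
    then show False using nr by simp
  qed
  then obtain k' where kk: "k = Suc k'" by (cases k) auto
  have ineq: "t^2 < 4 * q" unfolding t_def q_def by (rule nonreal_ineq[OF ll nr])
  define s where "s = sqrt (q - t^2/4)"
  have s0: "s > 0" unfolding s_def using ineq by simp
  have ss: "s^2 = q - t^2/4" unfolding s_def using ineq by simp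
  define r where "r c = cd_add (cd_of_real k (t/2)) (cd_scale c (e1 k))" for c
  have lr: "length (r c) = 2^k" for c using k0 by (simp add: r_def)
  have le: "length (e1 k) = 2^k" using k0 by simp
  have two: "(2::nat) \<le> 2^k" using kk by simp
  have rl: "r c = (t/2) # c # replicate (2^k - 2) 0" for c
  proof (rule nth_equalityI)
    show "length (r c) = length ((t/2) # c # replicate (2^k - 2) 0)" using lr two by simp
    fix i assume "i < length (r c)"
    then have i: "i < 2^k" using lr by simp
    show "r c ! i = ((t/2) # c # replicate (2^k - 2) 0) ! i"
      using i le by (cases i; cases "i - 1") (auto simp: r_def e1_def nth_Cons')
  qed
  have trr: "cd_tr k (r c) = t" for c using lr by (simp add: tr_eq rl)
  have nrr: "cd_norm k (r c) = t^2/4 + c^2" for c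
    using lr by (simp add: norm_eq rl sumsq_Cons sumsq_rep0 power_divide)
  have root: "cd_add (cd_mult k ?A (r c)) ?B = cd_zero k" if c2: "c^2 = s^2" for c
  proof -
    have "cd_charpoly_eval k lam (r c) = cd_charpoly_eval k (r c) (r c)"
      unfolding cd_charpoly_eval_def using trr nrr c2 ss t_def q_def by simp
    also have "\<dots> = cd_zero k" by (rule charpoly_self[OF lr])
    finally have cp: "cd_charpoly_eval k lam (r c) = cd_zero k" .
    then have "cd_poly_eval k a N (r c) = cd_zero k"
      using sph lr by (auto simp: cd_spherical_root_def cd_carrier_def)
    then show ?thesis using poly_eval_lin[OF la lr cp] t_def q_def by simp
  qed
  have MAr: "cd_mult k ?A (r c) = cd_add (cd_mult k ?A (cd_of_real k (t/2))) (cd_scale c (cd_mult k ?A (e1 k)))" for c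
    unfolding r_def using lA le by (simp add: MR_add MR_scale)
  have MAe: "cd_mult k ?A (e1 k) = cd_zero k"
  proof (rule nth_equalityI)
    show "length (cd_mult k ?A (e1 k)) = length (cd_zero k)" by (simp add: cd_zero_def)
    fix i assume "i < length (cd_mult k ?A (e1 k))"
    then have i: "i < 2^k" by simp
    have "cd_add (cd_mult k ?A (r c)) ?B ! i = 0" if "c^2 = s^2" for c
      using root[OF that] i by (simp add: cd_zero_def)
    then have p: "cd_mult k ?A (cd_of_real k (t/2)) ! i + c * cd_mult k ?A (e1 k) ! i + ?B ! i = 0"
      if "c^2 = s^2" for c
      using that i lB le unfolding MAr by simp
    have h1: "cd_mult k ?A (cd_of_real k (t/2)) ! i + s * cd_mult k ?A (e1 k) ! i + ?B ! i = 0"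
      by (rule p) simp
    have h2: "cd_mult k ?A (cd_of_real k (t/2)) ! i + (-s) * cd_mult k ?A (e1 k) ! i + ?B ! i = 0"
      by (rule p) simp
    have h3: "(-s) * cd_mult k ?A (e1 k) ! i = - (s * cd_mult k ?A (e1 k) ! i)" by simp
    have "s * cd_mult k ?A (e1 k) ! i = 0"
      using h1 h2 h3 by linarith
    then show "cd_mult k ?A (e1 k) ! i = cd_zero k ! i" using s0 i by (simp add: cd_zero_def)
  qed
  have A0: "?A = cd_zero k"
  proof -
    have "cd_mult k (cd_mult k ?A (e1 k)) (e1 k) = cd_scale (-1) ?A"
      using e1_sq[of ?A k'] lA kk by (simp add: M_def')
    then have "cd_scale (-1) ?A = cd_zero k"
      unfolding MAe cd_zero_def using le by (simp add: M_zeroL)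
    then have "\<forall>i<2^k. cd_scale (-1) ?A ! i = cd_zero k ! i" by simp
    then have "\<forall>i<2^k. ?A ! i = 0" using lA by (simp add: cd_zero_def)
    then show ?thesis using lA by (intro nth_equalityI) (auto simp: cd_zero_def)
  qed
  have B0: "?B = cd_zero k"
  proof -
    have "cd_add (cd_mult k ?A (r s)) ?B = cd_zero k" by (rule root) simp
    then have "cd_add (cd_of_real k 0) ?B = cd_of_real k 0"
      unfolding A0 cd_zero_def using lr by (simp add: M_zeroL)
    then have "\<forall>i<2^k. cd_add (cd_of_real k 0) ?B ! i = cd_of_real k 0 ! i" by simp
    then have "\<forall>i<2^k. ?B ! i = 0" using lB by simp
    then show ?thesis using lB by (intro nth_equalityI) (auto simp: cd_zero_def)
  qed
  show ?thesis using A0 B0 by simp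
qed


lemma zpow_ab:
  fixes z :: complex
  assumes "z^2 = of_real t * z - of_real q"
  shows "z^j = of_real (fst (ab t q j)) * z + of_real (snd (ab t q j))"
proof (induction j)
  case 0
  then show ?case by simp
next
  case (Suc j)
  have "z^Suc j = z * z^j" by simp
  also have "\<dots> = of_real (fst (ab t q j)) * z^2 + of_real (snd (ab t q j)) * z"
    unfolding Suc by (simp add: algebra_simps power2_eq_square)
  also have "\<dots> = of_real (fst (ab t q (Suc j))) * z + of_real (snd (ab t q (Suc j)))"
    unfolding assms by (simp add: algebra_simps)
  finally show ?case .
qed

lemma sph_coord:
  assumes la: "\<forall>j\<le>N. length (a j) = 2^k" and sph: "cd_spherical_root k a N lam" and i: "i < 2^k"
  defines "t \<equiv> cd_tr k lam" and "q \<equiv> cd_norm k lam"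
  shows "(\<Sum>j\<le>N. fst (ab t q j) * (a j ! i)) = 0 \<and> (\<Sum>j\<le>N. snd (ab t q j) * (a j ! i)) = 0"
proof -
  let ?js = "[0..<Suc N]"
  have la': "\<And>j. j \<in> set ?js \<Longrightarrow> length (a j) = 2^k" using la by auto
  have z: "csum k (\<lambda>j. cd_scale (fst (ab t q j)) (a j)) ?js = cd_zero k \<and>
         csum k (\<lambda>j. cd_scale (snd (ab t q j)) (a j)) ?js = cd_zero k"
    unfolding t_def q_def by (rule sph_zero[OF la sph])
  have n1: "csum k (\<lambda>j. cd_scale (fst (ab t q j)) (a j)) ?js ! i = (\<Sum>j\<leftarrow>?js. cd_scale (fst (ab t q j)) (a j) ! i)"
    by (rule nth_csum) (use la' i in auto)
  have n2: "csum k (\<lambda>j. cd_scale (snd (ab t q j)) (a j)) ?js ! i = (\<Sum>j\<leftarrow>?js. cd_scale (snd (ab t q j)) (a j) ! i)"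
    by (rule nth_csum) (use la' i in auto)
  have c1: "(\<Sum>j\<leftarrow>?js. cd_scale (fst (ab t q j)) (a j) ! i) = (\<Sum>j\<le>N. fst (ab t q j) * (a j ! i))"
    unfolding sum_set_upt_conv_sum_list_nat[symmetric] atLeast0LessThan lessThan_Suc_atMost
    by (rule sum.cong) (use la i in auto)
  have c2: "(\<Sum>j\<leftarrow>?js. cd_scale (snd (ab t q j)) (a j) ! i) = (\<Sum>j\<le>N. snd (ab t q j) * (a j ! i))"
    unfolding sum_set_upt_conv_sum_list_nat[symmetric] atLeast0LessThan lessThan_Suc_atMost
    by (rule sum.cong) (use la i in auto)
  show ?thesis using z n1 n2 c1 c2 i by (simp add: cd_zero_def)
qed

lemma card_classes:
  assumes la: "\<forall>j\<le>N. length (a j) = 2^k" and an: "a N \<noteq> cd_zero k"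
  defines "S \<equiv> {l. cd_spherical_root k a N l}"
  shows "finite ((\<lambda>l. (cd_tr k l, cd_norm k l)) ` S) \<and> card ((\<lambda>l. (cd_tr k l, cd_norm k l)) ` S) \<le> N div 2"
proof -
  let ?T = "(\<lambda>l. (cd_tr k l, cd_norm k l)) ` S"
  have "\<exists>i<2^k. a N ! i \<noteq> 0"
  proof (rule ccontr)
    assume "\<not> ?thesis"
    then have "a N = cd_zero k" using la by (intro nth_equalityI) (auto simp: cd_zero_def)
    then show False using an by simp
  qed
  then obtain i0 where i0: "i0 < 2^k" "a N ! i0 \<noteq> 0" by blast
  define c where "c j = a j ! i0" for j
  define p where "p = (\<Sum>j\<le>N. monom (complex_of_real (c j)) j)"
  have cp: "coeff p N = complex_of_real (c N)" unfolding p_def by (rule coeff_sum_monom) simp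
  have p0: "p \<noteq> 0" using cp i0 c_def by auto
  have dp: "degree p \<le> N" unfolding p_def by (rule degree_sum_le) (auto intro: order.trans[OF degree_monom_le])
  have pz: "poly p z = (\<Sum>j\<le>N. complex_of_real (c j) * z^j)" for z
    unfolding p_def by (simp add: poly_sum poly_monom)
  define sq where "sq tq = sqrt (snd tq - (fst tq)^2/4)" for tq :: "real \<times> real"
  define g where "g x = Complex (fst (fst x) / 2) (if snd x then sq (fst x) else - sq (fst x))" for x :: "(real \<times> real) \<times> bool"
  have Tprop: "(fst tq)^2 < 4 * snd tq \<and> poly p (g (tq, b)) = 0" if tqT: "tq \<in> ?T" for tq b
  proof -
    obtain lam where lam: "cd_spherical_root k a N lam" and tq: "tq = (cd_tr k lam, cd_norm k lam)"
      using tqT S_def by auto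
    define t where "t = cd_tr k lam"
    define q where "q = cd_norm k lam"
    have ll: "length lam = 2^k" and nr: "\<not> cd_is_real k lam"
      using lam by (auto simp: cd_spherical_root_def cd_carrier_def)
    have ineq: "t^2 < 4 * q" unfolding t_def q_def by (rule nonreal_ineq[OF ll nr])
    define s where "s = (if b then sq tq else - sq tq)"
    have ss: "s^2 = q - t^2/4" using ineq unfolding s_def sq_def tq t_def q_def by auto
    define z where "z = Complex (t/2) s"
    have gz: "g (tq, b) = z" unfolding g_def z_def s_def tq t_def by simp
    have z2: "z^2 = of_real t * z - of_real q"
      unfolding z_def using ss by (simp add: complex_eq_iff power2_eq_square algebra_simps)
    have co: "(\<Sum>j\<le>N. fst (ab t q j) * c j) = 0 \<and> (\<Sum>j\<le>N. snd (ab t q j) * c j) = 0"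
      unfolding c_def t_def q_def by (rule sph_coord[OF la lam i0(1)])
    have "poly p z = (\<Sum>j\<le>N. complex_of_real (c j) * (of_real (fst (ab t q j)) * z + of_real (snd (ab t q j))))"
      unfolding pz zpow_ab[OF z2] ..
    also have "\<dots> = of_real (\<Sum>j\<le>N. fst (ab t q j) * c j) * z + of_real (\<Sum>j\<le>N. snd (ab t q j) * c j)"
      by (simp add: sum_distrib_right sum_distrib_left sum.distrib algebra_simps)
    also have "\<dots> = 0" using co by simp
    finally show ?thesis using ineq gz tq t_def q_def by simp
  qed
  have inj: "inj_on g (?T \<times> UNIV)"
  proof (rule inj_onI)
    fix x y assume x: "x \<in> ?T \<times> UNIV" and y: "y \<in> ?T \<times> UNIV" and e: "g x = g y"
    obtain tq b where xx: "x = (tq, b)" by (cases x)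
    obtain tq' b' where yy: "y = (tq', b')" by (cases y)
    have i1: "(fst tq)^2 < 4 * snd tq" using Tprop x xx by auto
    have i2: "(fst tq')^2 < 4 * snd tq'" using Tprop y yy by auto
    have p1: "sq tq > 0" "sq tq' > 0" using i1 i2 unfolding sq_def by auto
    have gim: "Im (g (u, v)) = (if v then sq u else - sq u)" "Re (g (u, v)) = fst u / 2" for u v
      by (simp_all add: g_def)
    have "Re (g (tq, b)) = Re (g (tq', b'))" using e xx yy by simp
    then have ft: "fst tq = fst tq'" unfolding gim by simp
    have "Im (g (tq, b)) = Im (g (tq', b'))" using e xx yy by simp
    then have im: "(if b then sq tq else - sq tq) = (if b' then sq tq' else - sq tq')"
      unfolding gim .
    then have bb: "b = b'" and sqe: "sq tq = sq tq'" using p1 by (auto split: if_splits)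
    have "(sq tq)^2 = snd tq - (fst tq)^2/4" using i1 unfolding sq_def by simp
    moreover have "(sq tq')^2 = snd tq' - (fst tq')^2/4" using i2 unfolding sq_def by simp
    ultimately have "snd tq = snd tq'" using sqe ft by simp
    then show "x = y" using xx yy ft bb by (simp add: prod_eq_iff)
  qed
  have sub: "g ` (?T \<times> UNIV) \<subseteq> {z. poly p z = 0}" using Tprop by auto
  have fR: "finite {z. poly p z = 0}" by (rule poly_roots_finite[OF p0])
  have fTU: "finite (?T \<times> (UNIV :: bool set))"
    using finite_subset[OF sub fR] inj finite_imageD by blast
  have fT: "finite ?T" using fTU by (auto simp add: finite_cartesian_product_iff)
  have "card (?T \<times> (UNIV :: bool set)) = card (g ` (?T \<times> UNIV))" using card_image[OF inj] by simp
  also have "\<dots> \<le> card {z. poly p z = 0}" by (rule card_mono[OF fR sub])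
  also have "\<dots> \<le> degree p" by (rule card_poly_roots_bound[OF p0])
  also have "\<dots> \<le> N" by (rule dp)
  finally have "card ?T * 2 \<le> N" by (simp add: card_cartesian_product)
  then show ?thesis using fT by simp
qed


theorem corollary3p14:
  fixes k n :: nat and a :: "nat \<Rightarrow> real list"
  assumes "\<forall>j \<le> n. a j \<in> cd_carrier k"
    and "a n \<noteq> cd_zero k"
  shows "\<exists>C. C \<subseteq> cd_carrier k \<and> finite C \<and> card C \<le> n div 2 \<and>
           {l. cd_spherical_root k a n l} = (\<Union>c\<in>C. cd_quad_class k c)"
proof -
  have la: "\<forall>j\<le>n. length (a j) = 2^k" using assms(1) by (simp add: cd_carrier_def)
  define S where "S = {l. cd_spherical_root k a n l}"
  define F where "F l = (cd_tr k l, cd_norm k l)" for l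
  have TT: "finite (F ` S) \<and> card (F ` S) \<le> n div 2"
    using card_classes[OF la assms(2)] unfolding S_def F_def by simp
  define rep where "rep p = (SOME l. l \<in> S \<and> F l = p)" for p
  have rep: "rep (F l) \<in> S \<and> F (rep (F l)) = F l" if "l \<in> S" for l
    unfolding rep_def by (rule someI[of _ l]) (use that in simp)
  define C where "C = rep ` (F ` S)"
  have CS: "C \<subseteq> S" unfolding C_def using rep by auto
  have Scar: "S \<subseteq> cd_carrier k" unfolding S_def cd_spherical_root_def by auto
  have fC: "finite C" unfolding C_def using TT by simp
  have cC: "card C \<le> n div 2" unfolding C_def using TT card_image_le le_trans by blast
  have cp_eq: "cd_charpoly_eval k c r = cd_charpoly_eval k x r" if "F c = F x" for c x r
    using that unfolding F_def cd_charpoly_eval_def by simp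
  have "S = (\<Union>c\<in>C. cd_quad_class k c)"
  proof
    show "S \<subseteq> (\<Union>c\<in>C. cd_quad_class k c)"
    proof
      fix l assume l: "l \<in> S"
      have "rep (F l) \<in> C" unfolding C_def using l by simp
      moreover have "l \<in> cd_quad_class k (rep (F l))"
        using rep[OF l] l Scar unfolding cd_quad_class_def cd_quad_equiv_def F_def by auto
      ultimately show "l \<in> (\<Union>c\<in>C. cd_quad_class k c)" by blast
    qed
  next
    show "(\<Union>c\<in>C. cd_quad_class k c) \<subseteq> S"
    proof
      fix x assume "x \<in> (\<Union>c\<in>C. cd_quad_class k c)"
      then obtain c where c: "c \<in> C" and xc: "x \<in> cd_quad_class k c" by blast
      have cS: "c \<in> S" using c CS by auto
      have xcar: "x \<in> cd_carrier k" and Fe: "F c = F x"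
        using xc unfolding cd_quad_class_def cd_quad_equiv_def F_def by auto
      have csph: "cd_spherical_root k a n c" using cS S_def by simp
      have lc: "length c = 2^k" and ncr: "\<not> cd_is_real k c"
        using csph by (auto simp: cd_spherical_root_def cd_carrier_def)
      have lx: "length x = 2^k" using xcar by (simp add: cd_carrier_def)
      have ineq: "(cd_tr k c)^2 < 4 * cd_norm k c" by (rule nonreal_ineq[OF lc ncr])
      have nxr: "\<not> cd_is_real k x"
      proof
        assume "cd_is_real k x"
        then have "(cd_tr k x)^2 = 4 * cd_norm k x" by (rule real_eq)
        then show False using ineq Fe unfolding F_def by simp
      qed
      have fx: "cd_poly_eval k a n x = cd_zero k"
      proof -
        have "cd_charpoly_eval k c x = cd_charpoly_eval k x x" by (rule cp_eq[OF Fe])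
        also have "\<dots> = cd_zero k" by (rule charpoly_self[OF lx])
        finally show ?thesis using csph xcar unfolding cd_spherical_root_def by blast
      qed
      have "\<forall>r\<in>cd_carrier k. cd_charpoly_eval k x r = cd_zero k \<longrightarrow> cd_poly_eval k a n r = cd_zero k"
        using csph cp_eq[OF Fe] unfolding cd_spherical_root_def by metis
      then show "x \<in> S" unfolding S_def cd_spherical_root_def using xcar nxr fx by simp
    qed
  qed
  then show ?thesis using CS Scar fC cC unfolding S_def by blast
qed

end
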